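(* Let $T$ be an interval, and let $u\in H^1_{loc}(T;\mathcal V)\cap C^0(T;\mathcal V)$ with $u(t)\in\mathcal V_{[0,1]}$ for all $t\in T$, and $\beta:T\to\mathcal V$, be such that for a.e. $t\in T$ \[ \varepsilon \frac{du}{dt} + \varepsilon\Delta u(t)-u(t)+\overline{u(t)}\,\mathbf{1} = \beta(t) - \overline{\beta(t)}\,\mathbf{1} ,\qquad \beta(t)\in \mathcal{B}(u(t)). \] Write $\bar u:=\overline{u(t)}$. Then for a.e. $t\in T$ and all $i\in V$, \[ \beta_i(t) -\overline{\beta(t)}= \begin{cases} \bar u+\varepsilon(\Delta u(t))_i, &\text{if }u_i(t) = 0,\\ -\overline{\beta(t)}, &\text{if }u_i(t) \in (0,1),\\ \bar u-1+\varepsilon(\Delta u(t))_i, &\text{if }u_i(t) = 1. \end{cases} \]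
   Context: $G=(V,E)$ is a finite, simple, connected, undirected graph with weights $\omega_{ij}=\omega_{ji}>0$ for $ij\in E$, $\omega_{ij}=0$ otherwise; $d_i=\sum_j\omega_{ij}$, $r\in[0,1]$ fixed. $\mathcal V$ = functions $V\to\mathbb R$ with inner product $\langle u,v\rangle_{\mathcal V}=\sum_i u_iv_id_i^r$; $\mathcal V_X$ = functions $V\to X$. $(\Delta u)_i=d_i^{-r}\sum_j\omega_{ij}(u_i-u_j)$. $\mathbf 1$ is the all-ones function, $\mathcal M(u)=\langle u,\mathbf 1\rangle_{\mathcal V}$, and $\bar v:=\mathcal M(v)/\mathcal M(\mathbf 1)$ for $v\in\mathcal V$. $\varepsilon>0$. For $u\in\mathcal V_{[0,1]}$, $\mathcal B(u)$ is the set of $\beta\in\mathcal V$ with $\beta_i\ge0$ if $u_i=0$, $\beta_i=0$ if $0<u_i<1$, $\beta_i\le0$ if $u_i=1$ (and $\mathcal B(u)=\emptyset$ if $u\notin\mathcal V_{[0,1]}$). $H^1_{loc}(T;\mathcal V)$: functions $T\to\mathcal V$ each of whose components lies in $H^1((a,b))$ for all $a,b\in T$. *)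

theory Defs
  imports "HOL-Analysis.Analysis"
begin

definition wgraph :: "('v::finite \<Rightarrow> 'v \<Rightarrow> real) \<Rightarrow> bool" where
  "wgraph w \<longleftrightarrow> (\<forall>i j. w i j = w j i) \<and> (\<forall>i j. w i j \<ge> 0) \<and> (\<forall>i. w i i = 0)
     \<and> (\<forall>i j. (i, j) \<in> {(x, y). w x y > 0}\<^sup>*)"

definition degree :: "('v::finite \<Rightarrow> 'v \<Rightarrow> real) \<Rightarrow> 'v \<Rightarrow> real" where
  "degree w i = (\<Sum>j\<in>UNIV. w i j)"

definition graph_laplacian :: "('v::finite \<Rightarrow> 'v \<Rightarrow> real) \<Rightarrow> real \<Rightarrow> ('v \<Rightarrow> real) \<Rightarrow> 'v \<Rightarrow> real" where
  "graph_laplacian w r u i = degree w i powr (- r) * (\<Sum>j\<in>UNIV. w i j * (u i - u j))"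

definition graph_mass :: "('v::finite \<Rightarrow> 'v \<Rightarrow> real) \<Rightarrow> real \<Rightarrow> ('v \<Rightarrow> real) \<Rightarrow> real" where
  "graph_mass w r u = (\<Sum>i\<in>UNIV. u i * degree w i powr r)"

definition graph_mean :: "('v::finite \<Rightarrow> 'v \<Rightarrow> real) \<Rightarrow> real \<Rightarrow> ('v \<Rightarrow> real) \<Rightarrow> real" where
  "graph_mean w r v = graph_mass w r v / graph_mass w r (\<lambda>_. 1)"

definition Bset :: "('v \<Rightarrow> real) \<Rightarrow> ('v \<Rightarrow> real) set" where
  "Bset u = (if (\<forall>i. u i \<in> {0..1}) then
      {\<beta>. \<forall>i. (u i = 0 \<longrightarrow> \<beta> i \<ge> 0) \<and> (0 < u i \<and> u i < 1 \<longrightarrow> \<beta> i = 0)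
               \<and> (u i = 1 \<longrightarrow> \<beta> i \<le> 0)}
    else {})"

definition smooth_fun :: "(real \<Rightarrow> real) \<Rightarrow> bool" where
  "smooth_fun \<phi> \<longleftrightarrow> (\<forall>n. ((deriv ^^ n) \<phi>) differentiable_on UNIV)"

definition test_fun :: "(real \<Rightarrow> real) \<Rightarrow> real \<Rightarrow> real \<Rightarrow> bool" where
  "test_fun \<phi> a b \<longleftrightarrow> smooth_fun \<phi> \<and> compact (closure {x. \<phi> x \<noteq> 0})
      \<and> closure {x. \<phi> x \<noteq> 0} \<subseteq> {a<..<b}"

definition L2_on :: "(real \<Rightarrow> real) \<Rightarrow> real \<Rightarrow> real \<Rightarrow> bool" where
  "L2_on f a b \<longleftrightarrow> (\<lambda>x. indicator {a<..<b} x * f x) \<in> borel_measurable lebesgue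
      \<and> set_integrable lebesgue {a<..<b} (\<lambda>x. (f x)\<^sup>2)"

definition weak_deriv_on :: "(real \<Rightarrow> real) \<Rightarrow> (real \<Rightarrow> real) \<Rightarrow> real \<Rightarrow> real \<Rightarrow> bool" where
  "weak_deriv_on f g a b \<longleftrightarrow> (\<forall>\<phi>. test_fun \<phi> a b \<longrightarrow>
      (LINT x:{a<..<b}|lebesgue. f x * deriv \<phi> x) = - (LINT x:{a<..<b}|lebesgue. g x * \<phi> x))"

definition H1_on :: "(real \<Rightarrow> real) \<Rightarrow> real \<Rightarrow> real \<Rightarrow> bool" where
  "H1_on f a b \<longleftrightarrow> L2_on f a b \<and> (\<exists>g. L2_on g a b \<and> weak_deriv_on f g a b)"

definition H1_loc :: "real set \<Rightarrow> (real \<Rightarrow> 'v \<Rightarrow> real) \<Rightarrow> bool" where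
  "H1_loc T u \<longleftrightarrow> (\<forall>i. \<forall>a\<in>T. \<forall>b\<in>T. H1_on (\<lambda>t. u t i) a b)"

end

theory Submission
  imports Defs
begin


definition sm :: "nat \<Rightarrow> (real \<Rightarrow> real) \<Rightarrow> bool" where
  "sm n f \<longleftrightarrow> (\<forall>k\<le>n. (deriv ^^ k) f differentiable_on UNIV)"

lemma sm_0: "sm 0 f \<longleftrightarrow> f differentiable_on UNIV"
  by (simp add: sm_def)

lemma sm_Suc: "sm (Suc n) f \<longleftrightarrow> f differentiable_on UNIV \<and> sm n (deriv f)"
proof -
  have "(\<forall>k\<le>Suc n. P k) \<longleftrightarrow> P 0 \<and> (\<forall>k\<le>n. P (Suc k))" for P
    by (metis Suc_le_mono le0 not0_implies_Suc)
  then show ?thesis unfolding sm_def by (simp add: funpow_Suc_right del: funpow.simps)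
qed

lemma sm_mono: "sm (Suc n) f \<Longrightarrow> sm n f"
  by (simp add: sm_def)

lemma diffI: fixes f :: "real \<Rightarrow> real" shows "(\<And>x. (f has_real_derivative D x) (at x)) \<Longrightarrow> f differentiable_on UNIV"
  by (meson differentiable_at_imp_differentiable_on real_differentiable_def)

lemma sm_diff: "sm n f \<Longrightarrow> f differentiable_on UNIV"
  by (cases n) (auto simp: sm_Suc sm_0)

lemma dUNIV: fixes f :: "real \<Rightarrow> real" shows "f differentiable_on UNIV \<Longrightarrow> (f has_real_derivative deriv f x) (at x)"
  by (meson DERIV_deriv_iff_real_differentiable UNIV_I differentiable_on_def)

lemma dUNIV': fixes f :: "real \<Rightarrow> real" shows "f differentiable_on UNIV \<Longrightarrow> f field_differentiable at x"
  using dUNIV[of f x] unfolding field_differentiable_def by blast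

lemma deriv_add_fun: fixes f :: "real \<Rightarrow> real" shows "f differentiable_on UNIV \<Longrightarrow> g differentiable_on UNIV \<Longrightarrow>
   deriv (\<lambda>x. f x + g x) = (\<lambda>x. deriv f x + deriv g x)"
  by (rule ext, rule deriv_add[OF dUNIV' dUNIV'])

lemma deriv_mult_fun: fixes f :: "real \<Rightarrow> real" shows "f differentiable_on UNIV \<Longrightarrow> g differentiable_on UNIV \<Longrightarrow>
   deriv (\<lambda>x. f x * g x) = (\<lambda>x. deriv f x * g x + f x * deriv g x)"
  by (rule ext, subst deriv_mult[OF dUNIV' dUNIV'], auto)

lemma diff_add: fixes f :: "real \<Rightarrow> real" shows "f differentiable_on UNIV \<Longrightarrow> g differentiable_on UNIV \<Longrightarrow>
   (\<lambda>x. f x + g x) differentiable_on UNIV"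
  by (simp add: differentiable_on_add)

lemma diff_mult: fixes f :: "real \<Rightarrow> real" shows "f differentiable_on UNIV \<Longrightarrow> g differentiable_on UNIV \<Longrightarrow>
   (\<lambda>x. f x * g x) differentiable_on UNIV"
  by (rule diffI, rule DERIV_mult[OF dUNIV dUNIV])

lemma sm_add: "sm n f \<Longrightarrow> sm n g \<Longrightarrow> sm n (\<lambda>x. f x + g x)"
proof (induction n arbitrary: f g)
  case 0 then show ?case by (simp add: sm_0 diff_add)
next
  case (Suc n)
  then show ?case
    by (auto simp: sm_Suc diff_add deriv_add_fun)
qed

lemma sm_mult: "sm n f \<Longrightarrow> sm n g \<Longrightarrow> sm n (\<lambda>x. f x * g x)"
proof (induction n arbitrary: f g)
  case 0 then show ?case by (simp add: sm_0 diff_mult)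
next
  case (Suc n)
  from Suc.prems have "sm n f" "sm n g" by (auto dest: sm_mono)
  with Suc have "sm n (\<lambda>x. deriv f x * g x)" "sm n (\<lambda>x. f x * deriv g x)"
    by (auto simp: sm_Suc intro!: Suc.IH)
  with Suc show ?case
    by (auto simp: sm_Suc diff_mult deriv_mult_fun intro!: sm_add)
qed

lemma sm_const: "sm n (\<lambda>x. c)"
proof (induction n arbitrary: c)
  case 0 then show ?case by (simp add: sm_0)
next
  case (Suc n)
  have "deriv (\<lambda>x. c) = (\<lambda>x. 0)" by (rule ext) simp
  with Suc show ?case by (simp add: sm_Suc)
qed

lemma sm_affine: "sm n f \<Longrightarrow> sm n (\<lambda>x. f (c * x + d))"
proof (induction n arbitrary: f)
  case 0
  then show ?case unfolding sm_0
    by (intro diffI, rule DERIV_chain2[OF dUNIV], auto intro!: derivative_eq_intros)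
next
  case (Suc n)
  then have fd: "f differentiable_on UNIV" and d1: "sm n (deriv f)" by (auto simp: sm_Suc)
  have dd: "((\<lambda>x. f (c * x + d)) has_real_derivative (c * deriv f (c * x + d))) (at x)" for x
  proof -
    have "((\<lambda>x. c*x+d) has_real_derivative c) (at x)" by (auto intro!: derivative_eq_intros)
    from DERIV_chain2[OF dUNIV[OF fd] this] show ?thesis by (simp add: mult.commute)
  qed
  then have "deriv (\<lambda>x. f (c * x + d)) = (\<lambda>x. c * deriv f (c * x + d))"
    by (intro ext DERIV_imp_deriv)
  moreover have "(\<lambda>x. f (c * x + d)) differentiable_on UNIV"
    using dd by (meson differentiable_at_imp_differentiable_on real_differentiable_def)
  ultimately show ?case
    using Suc.IH[OF d1] by (simp add: sm_Suc sm_mult sm_const)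
qed

lemma sm_inverse: "sm n g \<Longrightarrow> (\<And>x. g x \<noteq> 0) \<Longrightarrow> sm n (\<lambda>x. inverse (g x))"
proof (induction n arbitrary: g)
  case 0
  then show ?case unfolding sm_0
    by (simp add: differentiable_on_inverse)
next
  case (Suc n)
  then have gd: "g differentiable_on UNIV" and d1: "sm n (deriv g)" and g0: "sm n g"
    by (auto simp: sm_Suc intro: sm_mono)
  have dd: "((\<lambda>x. inverse (g x)) has_real_derivative ((\<lambda>x. - 1 * deriv g x * (inverse (g x) * inverse (g x))) x)) (at x)" for x
    using DERIV_inverse_fun[OF dUNIV[OF gd], of x] Suc.prems(2)[of x]
    by (simp add: power2_eq_square field_simps)
  then have e: "deriv (\<lambda>x. inverse (g x)) = (\<lambda>x. - 1 * deriv g x * (inverse (g x) * inverse (g x)))"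
    by (intro ext DERIV_imp_deriv)
  moreover have "(\<lambda>x. inverse (g x)) differentiable_on UNIV"
    using dd by (meson differentiable_at_imp_differentiable_on real_differentiable_def)
  moreover have "sm n (\<lambda>x. - 1 * deriv g x * (inverse (g x) * inverse (g x)))"
    using Suc.IH[OF g0 Suc.prems(2)] d1 sm_mult[OF sm_const[of n "-1"] d1]
    by (intro sm_mult sm_const)
  ultimately show ?case unfolding sm_Suc e by blast
qed

lemma smooth_funI: "(\<And>n. sm n f) \<Longrightarrow> smooth_fun f"
  unfolding smooth_fun_def sm_def by auto



definition hh :: "real \<Rightarrow> real" where
  "hh x = (if 0 < x then exp (- inverse x) else 0)"

primrec PP :: "nat \<Rightarrow> real poly" where
  "PP 0 = 1"
| "PP (Suc n) = [:0,0,1:] * (PP n - pderiv (PP n))"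

definition DD :: "nat \<Rightarrow> real \<Rightarrow> real" where
  "DD n x = (if 0 < x then poly (PP n) (inverse x) * exp (- inverse x) else 0)"

lemma poly_exp_lim: fixes p :: "real poly" shows "((\<lambda>z. poly p z * exp (- z)) \<longlongrightarrow> 0) at_top"
proof -
  have "((\<lambda>z. \<Sum>i\<le>Polynomial.degree p. coeff p i * (z ^ i / exp z)) \<longlongrightarrow> (\<Sum>i\<le>Polynomial.degree p. coeff p i * 0)) at_top"
    by (intro tendsto_sum tendsto_mult tendsto_const tendsto_power_div_exp_0)
  moreover have "(\<Sum>i\<le>Polynomial.degree p. coeff p i * (z ^ i / exp z)) = poly p z * exp (- z)" for z
    by (simp add: poly_altdef sum_distrib_right exp_minus divide_inverse mult.assoc)
  ultimately show ?thesis by simp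
qed

lemma DD_deriv_pos:
  assumes "0 < x"
  shows "(DD n has_real_derivative DD (Suc n) x) (at x)"
proof -
  let ?p = "PP n"
  have d: "((\<lambda>y. poly ?p (inverse y) * exp (- inverse y)) has_real_derivative
      (poly (pderiv ?p) (inverse x) * (- (inverse x ^ 2)) * exp (- inverse x)
       + poly ?p (inverse x) * (exp (- inverse x) * (inverse x ^ 2)))) (at x)"
    using assms
    by (auto intro!: derivative_eq_intros DERIV_chain2[OF poly_DERIV] simp: power2_eq_square)
  have e: "poly (pderiv ?p) (inverse x) * (- (inverse x ^ 2)) * exp (- inverse x)
       + poly ?p (inverse x) * (exp (- inverse x) * (inverse x ^ 2)) = DD (Suc n) x"
    using assms by (simp add: DD_def algebra_simps power2_eq_square)
  show ?thesis
    apply (rule has_field_derivative_transform_within_open[OF d[unfolded e], of "{0<..}"])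
    using assms by (auto simp: DD_def)
qed

lemma DD_deriv_neg:
  assumes "x < 0"
  shows "(DD n has_real_derivative DD (Suc n) x) (at x)"
proof -
  have "DD (Suc n) x = 0" using assms by (simp add: DD_def)
  then have "((\<lambda>y. 0) has_real_derivative DD (Suc n) x) (at x)" by simp
  then show ?thesis
    apply (rule has_field_derivative_transform_within_open[of _ _ _ "{..<0}"])
    using assms by (auto simp: DD_def)
qed

lemma DD_deriv_0: "(DD n has_real_derivative DD (Suc n) 0) (at 0)"
proof -
  have "((\<lambda>y. (DD n y - DD n 0) / (y - 0)) \<longlongrightarrow> 0) (at_left 0)"
  proof (rule Lim_transform_eventually[OF tendsto_const])
    show "\<forall>\<^sub>F y in at_left 0. 0 = (DD n y - DD n 0) / (y - 0)"
      unfolding eventually_at_left_field by (rule exI[of _ "-1"]) (auto simp: DD_def)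
  qed
  moreover have "((\<lambda>y. (DD n y - DD n 0) / (y - 0)) \<longlongrightarrow> 0) (at_right 0)"
  proof (rule Lim_transform_eventually)
    show "((\<lambda>y. poly (pCons 0 (PP n)) (inverse y) * exp (- inverse y)) \<longlongrightarrow> 0) (at_right 0)"
      using filterlim_compose[OF poly_exp_lim[of "pCons 0 (PP n)"] filterlim_inverse_at_top_right] by simp
    show "\<forall>\<^sub>F y in at_right 0. poly (pCons 0 (PP n)) (inverse y) * exp (- inverse y) = (DD n y - DD n 0) / (y - 0)"
      unfolding eventually_at_right_field by (rule exI[of _ "1"]) (auto simp: DD_def field_simps)
  qed
  ultimately have "((\<lambda>y. (DD n y - DD n 0) / (y - 0)) \<longlongrightarrow> 0) (at 0)"
    by (simp add: filterlim_at_split)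
  then show ?thesis by (simp add: has_field_derivative_iff DD_def)
qed

lemma DD_deriv: "(DD n has_real_derivative DD (Suc n) x) (at x)"
  using DD_deriv_pos DD_deriv_neg DD_deriv_0 by (cases "x < 0"; cases "x = 0") auto

lemma DD_0: "DD 0 = hh"
  by (auto simp: DD_def hh_def)

lemma funpow_deriv_hh: "(deriv ^^ n) hh = DD n"
  by (induction n) (auto simp: DD_0 intro!: ext DERIV_imp_deriv DD_deriv)

lemma sm_hh: "sm n hh"
  unfolding sm_def funpow_deriv_hh by (auto intro!: diffI DD_deriv)

lemma hh_pos: "0 < x \<Longrightarrow> 0 < hh x" and hh_zero: "x \<le> 0 \<Longrightarrow> hh x = 0" and hh_nonneg: "0 \<le> hh x"
  by (auto simp: hh_def)

definition psi :: "real \<Rightarrow> real" where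
  "psi x = hh x * inverse (hh x + hh (- 1 * x + 1))"

lemma den_pos: "0 < hh x + hh (- 1 * x + 1)"
  using hh_pos[of x] hh_pos[of "- 1 * x + 1"] hh_nonneg[of x] hh_nonneg[of "- 1 * x + 1"]
  by (cases "0 < x") auto

lemma den_ne: "hh x + hh (1 - x) \<noteq> 0"
  using den_pos[of x] by simp

lemma sm_psi: "sm n psi"
  unfolding psi_def
  by (intro sm_mult sm_hh sm_inverse sm_add sm_affine) (auto simp: den_ne)

lemma psi_zero: "x \<le> 0 \<Longrightarrow> psi x = 0"
  by (simp add: psi_def hh_zero)

lemma psi_one: "1 \<le> x \<Longrightarrow> psi x = 1"
  using hh_pos[of x] by (simp add: psi_def hh_zero)

lemma psi_bounds: "0 \<le> psi x" "psi x \<le> 1"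
  using den_pos[of x] hh_nonneg[of x] hh_nonneg[of "- 1 * x + 1"]
  by (auto simp: psi_def field_simps simp del: mult_minus_left)

lemma psi_diff: "psi differentiable_on UNIV"
  using sm_psi[of 0] by (simp add: sm_0)

lemma psi_deriv: "(psi has_real_derivative deriv psi x) (at x)"
  by (rule dUNIV[OF psi_diff])

lemma psi'_cont: "continuous_on UNIV (deriv psi)"
  using sm_psi[of 1] by (simp add: sm_Suc sm_0 differentiable_imp_continuous_on)

lemma psi'_zero: assumes "x \<le> 0 \<or> 1 \<le> x" shows "deriv psi x = 0"
proof -
  have open_case: "deriv psi y = 0" if "y < 0 \<or> 1 < y" for y
  proof -
    have c: "((\<lambda>y. if y < 0 then 0 else 1) has_real_derivative 0) (at y)"
    proof (cases "y < 0")
      case True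
      have "((\<lambda>y. 0) has_real_derivative 0) (at y)" by simp
      then show ?thesis
        by (rule has_field_derivative_transform_within_open[of _ _ _ "{..<0}"]) (use True in auto)
    next
      case False
      have "((\<lambda>y. 1) has_real_derivative 0) (at y)" by simp
      then show ?thesis
        by (rule has_field_derivative_transform_within_open[of _ _ _ "{1<..}"]) (use False that in auto)
    qed
    have "(psi has_real_derivative 0) (at y)"
    proof (cases "y < 0")
      case True
      show ?thesis
        by (rule has_field_derivative_transform_within_open[OF c, of "{..<0}"]) (use True psi_zero in auto)
    next
      case False
      show ?thesis
        by (rule has_field_derivative_transform_within_open[OF c, of "{1<..}"]) (use False that psi_one in auto)
    qed
    then show ?thesis by (rule DERIV_imp_deriv)
  qed
  show ?thesis
  proof (cases "x < 0 \<or> 1 < x")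
    case True then show ?thesis by (rule open_case)
  next
    case False
    with assms have x: "x = 0 \<or> x = 1" by auto
    have cont: "isCont (deriv psi) x"
      using psi'_cont by (simp add: continuous_on_eq_continuous_at)
    show ?thesis
    proof (cases "x = 0")
      case True
      have "((deriv psi) \<longlongrightarrow> deriv psi x) (at_left x)"
        using cont by (simp add: isCont_def filterlim_at_split)
      moreover have "((deriv psi) \<longlongrightarrow> 0) (at_left x)"
        by (rule Lim_transform_eventually[OF tendsto_const])
           (use True in \<open>auto simp: eventually_at_left_field intro!: exI[of _ "-1"] open_case\<close>)
      ultimately show ?thesis by (simp add: tendsto_unique[OF trivial_limit_at_left_real])
    next
      case False
      with x have x1: "x = 1" by simp
      have "((deriv psi) \<longlongrightarrow> deriv psi x) (at_right x)"
        using cont by (simp add: isCont_def filterlim_at_split)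
      moreover have "((deriv psi) \<longlongrightarrow> 0) (at_right x)"
        by (rule Lim_transform_eventually[OF tendsto_const])
           (use x1 in \<open>auto simp: eventually_at_right_field intro!: exI[of _ "2"] open_case\<close>)
      ultimately show ?thesis by (simp add: tendsto_unique[OF trivial_limit_at_right_real])
    qed
  qed
qed



lemma psi'_bound: "\<exists>M>0. \<forall>y. \<bar>deriv psi y\<bar> \<le> M"
proof -
  have "compact (deriv psi ` {0..1})"
    by (rule compact_continuous_image[OF continuous_on_subset[OF psi'_cont]]) auto
  then obtain B where B: "\<forall>z\<in>deriv psi ` {0..1}. norm z \<le> B"
    using compact_imp_bounded bounded_iff by metis
  have "\<bar>deriv psi y\<bar> \<le> max B 1" for y
  proof (cases "y \<in> {0..1}")
    case True then have "norm (deriv psi y) \<le> B" using B by blast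
    then show ?thesis by simp
  next
    case False then show ?thesis using psi'_zero[of y] by auto
  qed
  then show ?thesis by (intro exI[of _ "max B 1"]) auto
qed

lemma avg_est:
  fixes f \<rho> :: "real \<Rightarrow> real"
  assumes fc: "continuous_on {a..b} f" and rc: "continuous_on UNIV \<rho>"
    and "a \<le> c" "c \<le> d" "d \<le> b"
    and z: "\<forall>x. x \<notin> {c..d} \<longrightarrow> \<rho> x = 0" and K: "\<forall>x. \<bar>\<rho> x\<bar> \<le> K"
    and I: "integral {c..d} \<rho> = 1" and e: "\<forall>x\<in>{c..d}. \<bar>f x - y\<bar> \<le> e"
  shows "\<bar>integral {a..b} (\<lambda>x. f x * \<rho> x) - y\<bar> \<le> e * K * (d - c)"
proof -
  have sub: "{c..d} \<subseteq> {a..b}" using assms by auto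
  have "integral {a..b} (\<lambda>x. f x * \<rho> x) = integral {a..b} (\<lambda>x. if x \<in> {c..d} then f x * \<rho> x else 0)"
    by (rule integral_cong) (use z in auto)
  also have "\<dots> = integral {c..d} (\<lambda>x. f x * \<rho> x)"
  proof -
    have "{c..d} \<inter> {a..b} = {c..d}" using sub by blast
    then show ?thesis by (simp only: integral_restrict_Int)
  qed
  finally have eq1: "integral {a..b} (\<lambda>x. f x * \<rho> x) = integral {c..d} (\<lambda>x. f x * \<rho> x)" .
  have fcd: "continuous_on {c..d} f" using continuous_on_subset[OF fc sub] .
  have rcd: "continuous_on {c..d} \<rho>" using continuous_on_subset[OF rc] by auto
  have i1: "(\<lambda>x. f x * \<rho> x) integrable_on {c..d}"
    by (rule integrable_continuous_interval, rule continuous_on_mult[OF fcd rcd])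
  have i2: "(\<lambda>x. y * \<rho> x) integrable_on {c..d}"
    by (rule integrable_continuous_interval, rule continuous_on_mult[OF continuous_on_const rcd])
  have "y = integral {c..d} (\<lambda>x. y * \<rho> x)" using I by simp
  moreover have "integral {c..d} (\<lambda>x. (f x - y) * \<rho> x) = integral {c..d} (\<lambda>x. f x * \<rho> x) - integral {c..d} (\<lambda>x. y * \<rho> x)"
    by (subst integral_diff[OF i1 i2, symmetric]) (simp add: algebra_simps)
  ultimately have "integral {a..b} (\<lambda>x. f x * \<rho> x) - y = integral {c..d} (\<lambda>x. (f x - y) * \<rho> x)"
    using eq1 by simp
  also have "\<bar>\<dots>\<bar> \<le> integral {c..d} (\<lambda>x. e * K)"
  proof -
    have "norm (integral {c..d} (\<lambda>x. (f x - y) * \<rho> x)) \<le> integral {c..d} (\<lambda>x. e * K)"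
    proof (rule integral_norm_bound_integral)
      show "(\<lambda>x. (f x - y) * \<rho> x) integrable_on {c..d}"
        by (rule integrable_continuous_interval, rule continuous_on_mult[OF continuous_on_diff[OF fcd continuous_on_const] rcd])
      show "(\<lambda>x::real. e * K) integrable_on {c..d}" by (rule Henstock_Kurzweil_Integration.integrable_const_ivl)
      fix x assume x: "x \<in> {c..d}"
      have "\<bar>f x - y\<bar> * \<bar>\<rho> x\<bar> \<le> e * K"
        by (rule mult_mono) (use e K x in auto)
      then show "norm ((f x - y) * \<rho> x) \<le> e * K" by (simp add: abs_mult)
    qed
    then show ?thesis by simp
  qed
  also have "\<dots> = e * K * (d - c)" using \<open>c \<le> d\<close> by simp
  finally show ?thesis .
qed

lemma avg_lim_gen:
  fixes f :: "real \<Rightarrow> real" and \<rho> :: "nat \<Rightarrow> real \<Rightarrow> real"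
  assumes fc: "continuous_on {a..b} f" and p: "p \<in> {a..b}"
    and cd: "\<And>n. c n < d n" "\<And>n. a \<le> c n" "\<And>n. d n \<le> b" "\<And>n. p \<in> {c n..d n}"
    and lim: "(\<lambda>n. d n - c n) \<longlonglongrightarrow> 0"
    and rc: "\<And>n. continuous_on UNIV (\<rho> n)"
    and z: "\<And>n. \<forall>x. x \<notin> {c n..d n} \<longrightarrow> \<rho> n x = 0"
    and M: "M > 0" "\<And>n x. \<bar>\<rho> n x\<bar> * (d n - c n) \<le> M"
    and I: "\<And>n. integral {c n..d n} (\<rho> n) = 1"
  shows "(\<lambda>n. integral {a..b} (\<lambda>x. f x * \<rho> n x)) \<longlonglongrightarrow> f p"
proof (rule LIMSEQ_I)
  fix r :: real assume r: "0 < r"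
  define e where "e = r / (2 * M)"
  have e0: "e > 0" using r M by (simp add: e_def)
  obtain d0 where d0: "d0 > 0" "\<forall>x'\<in>{a..b}. dist x' p < d0 \<longrightarrow> dist (f x') (f p) < e"
    using fc[unfolded continuous_on_iff, rule_format, OF p e0] by (elim exE conjE) (rule that)
  obtain N where N: "\<forall>n\<ge>N. norm ((d n - c n) - 0) < d0"
    using LIMSEQ_D[OF lim d0(1)] by blast
  show "\<exists>N. \<forall>n\<ge>N. norm (integral {a..b} (\<lambda>x. f x * \<rho> n x) - f p) < r"
  proof (intro exI allI impI)
    fix n assume "n \<ge> N"
    then have dn: "d n - c n < d0" using N cd(1)[of n] by auto
    have ef: "\<forall>x\<in>{c n..d n}. \<bar>f x - f p\<bar> \<le> e"
    proof
      fix x assume x: "x \<in> {c n..d n}"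
      then have "x \<in> {a..b}" using cd[of n] by auto
      moreover have "dist x p < d0" using x dn cd(4)[of n] by (auto simp: dist_real_def)
      ultimately have "dist (f x) (f p) < e" using d0(2) by blast
      then show "\<bar>f x - f p\<bar> \<le> e" by (simp add: dist_real_def)
    qed
    have K: "\<forall>x. \<bar>\<rho> n x\<bar> \<le> M / (d n - c n)"
      using M(2)[of n] cd(1)[of n] by (simp add: field_simps)
    have "\<bar>integral {a..b} (\<lambda>x. f x * \<rho> n x) - f p\<bar> \<le> e * (M / (d n - c n)) * (d n - c n)"
      by (rule avg_est[OF fc rc cd(2) less_imp_le[OF cd(1)] cd(3) z K I ef])
    also have "\<dots> = e * M" using cd(1)[of n] by simp
    also have "\<dots> < r" using r M by (simp add: e_def)
    finally show "norm (integral {a..b} (\<lambda>x. f x * \<rho> n x) - f p) < r" by simp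
  qed
qed

definition phi :: "real \<Rightarrow> real \<Rightarrow> real \<Rightarrow> real \<Rightarrow> real" where
  "phi s t \<delta> x = psi ((x - s) / \<delta>) * psi ((t - x) / \<delta>)"

lemma cont_psi'_aff: "continuous_on UNIV (\<lambda>x. deriv psi (c * x + d))"
  by (rule continuous_on_compose2[OF psi'_cont]) (auto intro!: continuous_intros)

lemma phi_smooth: assumes "\<delta> > 0" shows "smooth_fun (phi s t \<delta>)"
proof -
  have eq: "phi s t \<delta> = (\<lambda>x. psi (inverse \<delta> * x + - (s / \<delta>)) * psi ((- inverse \<delta>) * x + t / \<delta>))"
    by (rule ext) (simp add: phi_def divide_inverse algebra_simps)
  have h1: "sm n (\<lambda>x. psi (inverse \<delta> * x + - (s / \<delta>)))" for n by (rule sm_affine[OF sm_psi])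
  have h2: "sm n (\<lambda>x. psi ((- inverse \<delta>) * x + t / \<delta>))" for n by (rule sm_affine[OF sm_psi])
  show ?thesis unfolding eq by (rule smooth_funI, rule sm_mult[OF h1 h2])
qed

lemma phi_zero: assumes "\<delta> > 0" "x \<notin> {s<..<t}" shows "phi s t \<delta> x = 0"
proof (cases "x \<le> s")
  case True
  then have "(x - s) / \<delta> \<le> 0" using assms by (simp add: divide_nonpos_pos)
  then show ?thesis by (simp add: phi_def psi_zero)
next
  case False
  then have "t \<le> x" using assms by auto
  then have "(t - x) / \<delta> \<le> 0" using assms by (simp add: divide_nonpos_pos)
  then show ?thesis by (simp add: phi_def psi_zero)
qed

lemma phi_bounds: "0 \<le> phi s t \<delta> x" "phi s t \<delta> x \<le> 1"
  unfolding phi_def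
  by (rule mult_nonneg_nonneg psi_bounds psi_bounds mult_le_one psi_bounds)+

lemma phi_one: assumes "\<delta> > 0" "s + \<delta> \<le> x" "x + \<delta> \<le> t" shows "phi s t \<delta> x = 1"
proof -
  have "1 \<le> (x - s) / \<delta>" "1 \<le> (t - x) / \<delta>" using assms by (auto simp: field_simps)
  then show ?thesis by (simp add: phi_def psi_one)
qed

lemma phi_test: assumes "\<delta> > 0" "a < s" "t < b" shows "test_fun (phi s t \<delta>) a b"
proof -
  have sub: "{x. phi s t \<delta> x \<noteq> 0} \<subseteq> {s..t}"
  proof
    fix x assume "x \<in> {x. phi s t \<delta> x \<noteq> 0}"
    then have "x \<in> {s<..<t}" using phi_zero[OF assms(1), of x s t] by blast
    then show "x \<in> {s..t}" by simp
  qed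
  have cl: "closure {x. phi s t \<delta> x \<noteq> 0} \<subseteq> {s..t}"
    by (rule closure_minimal[OF sub]) simp
  have bd: "bounded {x. phi s t \<delta> x \<noteq> 0}"
    by (rule bounded_subset[OF bounded_closed_interval sub])
  have cp: "compact (closure {x. phi s t \<delta> x \<noteq> 0})"
    using bd by (simp add: compact_closure)
  have "closure {x. phi s t \<delta> x \<noteq> 0} \<subseteq> {a<..<b}"
    using cl assms by auto
  then show ?thesis unfolding test_fun_def using phi_smooth[OF assms(1)] cp by blast
qed



lemma phi_deriv_full:
  assumes d0: "\<delta> \<noteq> 0"
  shows "(phi s t \<delta> has_real_derivative
      deriv psi ((x - s) / \<delta>) * (1 / \<delta>) * psi ((t - x) / \<delta>)
      + deriv psi ((t - x) / \<delta>) * (- 1 / \<delta>) * psi ((x - s) / \<delta>)) (at x)"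
proof -
  have d1: "((\<lambda>x. (x - s) / \<delta>) has_real_derivative 1 / \<delta>) (at x)"
    using d0 by (auto intro!: derivative_eq_intros)
  have d2: "((\<lambda>x. (t - x) / \<delta>) has_real_derivative - 1 / \<delta>) (at x)"
    using d0 by (auto intro!: derivative_eq_intros)
  have e1: "((\<lambda>x. psi ((x - s) / \<delta>)) has_real_derivative deriv psi ((x - s) / \<delta>) * (1 / \<delta>)) (at x)"
    by (rule DERIV_chain2[OF psi_deriv d1])
  have e2: "((\<lambda>x. psi ((t - x) / \<delta>)) has_real_derivative deriv psi ((t - x) / \<delta>) * (- 1 / \<delta>)) (at x)"
    by (rule DERIV_chain2[OF psi_deriv d2])
  show ?thesis unfolding phi_def by (rule DERIV_mult[OF e1 e2])
qed

lemma le_div1: "0 < \<delta> \<Longrightarrow> \<delta> \<le> y \<Longrightarrow> 1 \<le> y / (\<delta>::real)"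
  by (simp add: le_divide_eq)

lemma phi_deriv:
  assumes d: "\<delta> > 0" and st: "2 * \<delta> < t - s"
  shows "deriv (phi s t \<delta>) x = deriv psi ((x - s) / \<delta>) / \<delta> - deriv psi ((t - x) / \<delta>) / \<delta>"
proof -
  have "deriv psi ((x - s) / \<delta>) * (1 / \<delta>) * psi ((t - x) / \<delta>)
      + deriv psi ((t - x) / \<delta>) * (- 1 / \<delta>) * psi ((x - s) / \<delta>)
      = deriv psi ((x - s) / \<delta>) / \<delta> - deriv psi ((t - x) / \<delta>) / \<delta>"
  proof (cases "x \<le> s + \<delta>")
    case True
    then have "1 \<le> (t - x) / \<delta>" using d st by (intro le_div1) auto
    then have "psi ((t - x) / \<delta>) = 1" "deriv psi ((t - x) / \<delta>) = 0"
      using psi_one psi'_zero by auto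
    then show ?thesis by simp
  next
    case False
    then have a1: "1 \<le> (x - s) / \<delta>" using d by (intro le_div1) auto
    then have a2: "psi ((x - s) / \<delta>) = 1" "deriv psi ((x - s) / \<delta>) = 0"
      using psi_one psi'_zero by auto
    show ?thesis
    proof (cases "t - \<delta> \<le> x")
      case True
      then show ?thesis using a2 by simp
    next
      case False
      then have "1 \<le> (t - x) / \<delta>" using d by (intro le_div1) auto
      then have "psi ((t - x) / \<delta>) = 1" "deriv psi ((t - x) / \<delta>) = 0"
        using psi_one psi'_zero by auto
      then show ?thesis using a2 by simp
    qed
  qed
  then have "(phi s t \<delta> has_real_derivative deriv psi ((x - s) / \<delta>) / \<delta> - deriv psi ((t - x) / \<delta>) / \<delta>) (at x)"
    using phi_deriv_full[of \<delta> s t x] d by simp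
  then show ?thesis by (rule DERIV_imp_deriv)
qed



lemma cont_rho1: assumes "\<delta> \<noteq> 0" shows "continuous_on UNIV (\<lambda>x. deriv psi ((x - s) / \<delta>) / \<delta>)"
  by (intro continuous_intros continuous_on_compose2[OF psi'_cont]) (use assms in \<open>auto intro!: continuous_intros\<close>)

lemma cont_rho2: assumes "\<delta> \<noteq> 0" shows "continuous_on UNIV (\<lambda>x. deriv psi ((t - x) / \<delta>) / \<delta>)"
  by (intro continuous_intros continuous_on_compose2[OF psi'_cont]) (use assms in \<open>auto intro!: continuous_intros\<close>)

lemma ftc_rho1: assumes d: "\<delta> > 0"
  shows "integral {s..s + \<delta>} (\<lambda>x. deriv psi ((x - s) / \<delta>) / \<delta>) = 1"
proof -
  have "((\<lambda>x. deriv psi ((x - s) / \<delta>) / \<delta>) has_integral psi ((s + \<delta> - s) / \<delta>) - psi ((s - s) / \<delta>)) {s..s + \<delta>}"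
  proof (rule fundamental_theorem_of_calculus[where f = "\<lambda>x. psi ((x - s) / \<delta>)"])
    show "s \<le> s + \<delta>" using d by simp
    fix x :: real
    have d1: "((\<lambda>x. (x - s) / \<delta>) has_real_derivative 1 / \<delta>) (at x)"
      using d by (auto intro!: derivative_eq_intros)
    have "((\<lambda>x. psi ((x - s) / \<delta>)) has_real_derivative deriv psi ((x - s) / \<delta>) * (1 / \<delta>)) (at x)"
      by (rule DERIV_chain2[OF psi_deriv d1])
    then have "((\<lambda>x. psi ((x - s) / \<delta>)) has_vector_derivative deriv psi ((x - s) / \<delta>) / \<delta>) (at x)"
      by (simp add: has_real_derivative_iff_has_vector_derivative)
    then show "((\<lambda>x. psi ((x - s) / \<delta>)) has_vector_derivative deriv psi ((x - s) / \<delta>) / \<delta>) (at x within {s..s + \<delta>})"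
      by (rule has_vector_derivative_at_within)
  qed
  note H = integral_unique[OF this]
  have "psi ((s + \<delta> - s) / \<delta>) - psi ((s - s) / \<delta>) = 1" using d by (simp add: psi_one psi_zero)
  with H show ?thesis by linarith
qed

lemma ftc_rho2: assumes d: "\<delta> > 0"
  shows "integral {t - \<delta>..t} (\<lambda>x. deriv psi ((t - x) / \<delta>) / \<delta>) = 1"
proof -
  have "((\<lambda>x. deriv psi ((t - x) / \<delta>) / \<delta>) has_integral (- psi ((t - t) / \<delta>)) - (- psi ((t - (t - \<delta>)) / \<delta>))) {t - \<delta>..t}"
  proof (rule fundamental_theorem_of_calculus[where f = "\<lambda>x. - psi ((t - x) / \<delta>)"])
    show "t - \<delta> \<le> t" using d by simp
    fix x :: real
    have d1: "((\<lambda>x. (t - x) / \<delta>) has_real_derivative - 1 / \<delta>) (at x)"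
      using d by (auto intro!: derivative_eq_intros)
    have "((\<lambda>x. psi ((t - x) / \<delta>)) has_real_derivative deriv psi ((t - x) / \<delta>) * (- 1 / \<delta>)) (at x)"
      by (rule DERIV_chain2[OF psi_deriv d1])
    then have "((\<lambda>x. - psi ((t - x) / \<delta>)) has_real_derivative - (deriv psi ((t - x) / \<delta>) * (- 1 / \<delta>))) (at x)"
      by (rule DERIV_minus)
    then have "((\<lambda>x. - psi ((t - x) / \<delta>)) has_vector_derivative deriv psi ((t - x) / \<delta>) / \<delta>) (at x)"
      by (simp add: has_real_derivative_iff_has_vector_derivative)
    then show "((\<lambda>x. - psi ((t - x) / \<delta>)) has_vector_derivative deriv psi ((t - x) / \<delta>) / \<delta>) (at x within {t - \<delta>..t})"
      by (rule has_vector_derivative_at_within)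
  qed
  note H = integral_unique[OF this]
  have "(- psi ((t - t) / \<delta>)) - (- psi ((t - (t - \<delta>)) / \<delta>)) = 1" using d by (simp add: psi_one psi_zero)
  with H show ?thesis by linarith
qed

lemma phi_cont: assumes "\<delta> \<noteq> 0" shows "continuous_on UNIV (phi s t \<delta>)"
  using phi_deriv_full[OF assms] DERIV_isCont continuous_at_imp_continuous_on by blast

lemma meas_cont: "continuous_on UNIV (f::real\<Rightarrow>real) \<Longrightarrow> f \<in> borel_measurable lebesgue"
  by (simp add: borel_measurable_continuous_onI measurable_completion)

lemma dom_part:
  fixes g :: "real \<Rightarrow> real" and \<delta> :: "nat \<Rightarrow> real"
  assumes ab: "a < s" "s < t" "t < b"
    and gm: "(\<lambda>x. indicator {a<..<b} x * g x) \<in> borel_measurable lebesgue"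
    and gi: "set_integrable lebesgue {a<..<b} g"
    and dpos: "\<And>n. \<delta> n > 0" and dlim: "\<delta> \<longlonglongrightarrow> 0"
  shows "(\<lambda>n. LINT x:{a<..<b}|lebesgue. g x * phi s t (\<delta> n) x) \<longlonglongrightarrow> (LINT x:{s<..<t}|lebesgue. g x)"
proof -
  let ?G = "\<lambda>x. indicator {a<..<b} x * g x"
  have eqn: "(\<lambda>x. indicator {a<..<b} x *\<^sub>R (g x * phi s t (\<delta> n) x)) = (\<lambda>x. ?G x * phi s t (\<delta> n) x)" for n
    by (rule ext) simp
  have eqF: "(\<lambda>x. indicator {s<..<t} x *\<^sub>R g x) = (\<lambda>x. indicator {s<..<t} x * ?G x)"
    by (rule ext) (use ab in \<open>auto simp: indicator_def\<close>)
  have "(\<lambda>n. integral\<^sup>L lebesgue (\<lambda>x. indicator {a<..<b} x *\<^sub>R (g x * phi s t (\<delta> n) x)))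
        \<longlonglongrightarrow> integral\<^sup>L lebesgue (\<lambda>x. indicator {s<..<t} x *\<^sub>R g x)"
  proof (rule integral_dominated_convergence[where w = "\<lambda>x. \<bar>?G x\<bar>"])
    show "(\<lambda>x. indicator {s<..<t} x *\<^sub>R g x) \<in> borel_measurable lebesgue"
      unfolding eqF by (intro borel_measurable_times gm borel_measurable_indicator) simp
    show "(\<lambda>x. indicator {a<..<b} x *\<^sub>R (g x * phi s t (\<delta> n) x)) \<in> borel_measurable lebesgue" for n
      unfolding eqn using dpos[of n] by (intro borel_measurable_times gm meas_cont phi_cont) auto
    show "integrable lebesgue (\<lambda>x. \<bar>?G x\<bar>)"
      using gi unfolding set_integrable_def by (intro integrable_abs) simp
    show "AE x in lebesgue. norm (indicator {a<..<b} x *\<^sub>R (g x * phi s t (\<delta> n) x)) \<le> \<bar>?G x\<bar>" for n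
    proof (rule AE_I2)
      fix x
      have "\<bar>?G x * phi s t (\<delta> n) x\<bar> \<le> \<bar>?G x\<bar> * 1"
        unfolding abs_mult using phi_bounds[of s t "\<delta> n" x] by (intro mult_left_mono) auto
      then show "norm (indicator {a<..<b} x *\<^sub>R (g x * phi s t (\<delta> n) x)) \<le> \<bar>?G x\<bar>"
        using eqn[of n] by (metis mult.right_neutral real_norm_def)
    qed
    show "AE x in lebesgue. (\<lambda>n. indicator {a<..<b} x *\<^sub>R (g x * phi s t (\<delta> n) x)) \<longlonglongrightarrow> indicator {s<..<t} x *\<^sub>R g x"
    proof (rule AE_I2)
      fix x
      show "(\<lambda>n. indicator {a<..<b} x *\<^sub>R (g x * phi s t (\<delta> n) x)) \<longlonglongrightarrow> indicator {s<..<t} x *\<^sub>R g x"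
      proof (cases "x \<in> {s<..<t}")
        case True
        then have m: "min (x - s) (t - x) > 0" by auto
        have ev: "eventually (\<lambda>n. \<delta> n < min (x - s) (t - x)) sequentially"
          using order_tendstoD(2)[OF dlim m] .
        have "eventually (\<lambda>n. indicator {s<..<t} x *\<^sub>R g x = indicator {a<..<b} x *\<^sub>R (g x * phi s t (\<delta> n) x)) sequentially"
        proof (rule eventually_mono[OF ev])
          fix n assume "\<delta> n < min (x - s) (t - x)"
          then have "phi s t (\<delta> n) x = 1" using dpos[of n] by (intro phi_one) auto
          then show "indicator {s<..<t} x *\<^sub>R g x = indicator {a<..<b} x *\<^sub>R (g x * phi s t (\<delta> n) x)"
            using True ab by (simp add: indicator_def)
        qed
        then show ?thesis by (rule Lim_transform_eventually[OF tendsto_const])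
      next
        case False
        then have "phi s t (\<delta> n) x = 0" for n using phi_zero dpos by blast
        then show ?thesis using False by simp
      qed
    qed
  qed
  then show ?thesis by (simp add: set_lebesgue_integral_def)
qed



lemma ftc_weak:
  fixes f g :: "real \<Rightarrow> real"
  assumes ab: "a < s" "s < t" "t < b"
    and fc: "continuous_on {a..b} f"
    and gm: "(\<lambda>x. indicator {a<..<b} x * g x) \<in> borel_measurable lebesgue"
    and gi: "set_integrable lebesgue {a<..<b} g"
    and wd: "weak_deriv_on f g a b"
  shows "f t - f s = (LINT x:{s<..<t}|lebesgue. g x)"
proof -
  obtain M where M: "M > 0" "\<And>y. \<bar>deriv psi y\<bar> \<le> M" using psi'_bound by blast
  define \<delta> where "\<delta> n = (t - s) / 3 * inverse (real (Suc n))" for n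
  have dpos: "\<delta> n > 0" for n using ab by (simp add: \<delta>_def)
  have dle: "\<delta> n \<le> (t - s) / 3" for n
  proof -
    have "inverse (real (Suc n)) \<le> 1" by (simp add: inverse_le_1_iff)
    then show ?thesis unfolding \<delta>_def using ab
      by (metis divide_nonneg_pos le_numeral_extra(4) less_eq_real_def mult_left_mono mult.right_neutral diff_gt_0_iff_gt zero_less_numeral)
  qed
  have dsmall: "2 * \<delta> n < t - s" for n :: nat using dle[of n] ab by (simp add: field_simps)
  have dlim: "\<delta> \<longlonglongrightarrow> 0"
    unfolding \<delta>_def using tendsto_mult[OF tendsto_const LIMSEQ_inverse_real_of_nat, of "(t - s) / 3"] by simp
  define \<rho>1 where "\<rho>1 n x = deriv psi ((x - s) / \<delta> n) / \<delta> n" for n x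
  define \<rho>2 where "\<rho>2 n x = deriv psi ((t - x) / \<delta> n) / \<delta> n" for n x
  have c1: "continuous_on UNIV (\<rho>1 n)" for n
    unfolding \<rho>1_def using cont_rho1[of "\<delta> n" s] dpos[of n] by simp
  have c2: "continuous_on UNIV (\<rho>2 n)" for n
    unfolding \<rho>2_def using cont_rho2[of "\<delta> n" t] dpos[of n] by simp
  have dphi: "deriv (phi s t (\<delta> n)) = (\<lambda>x. \<rho>1 n x - \<rho>2 n x)" for n
    by (rule ext) (simp add: \<rho>1_def \<rho>2_def phi_deriv[OF dpos dsmall])
  have Lf: "(LINT x:{a<..<b}|lebesgue. f x * deriv (phi s t (\<delta> n)) x)
      = integral {a..b} (\<lambda>x. f x * \<rho>1 n x) - integral {a..b} (\<lambda>x. f x * \<rho>2 n x)" for n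
  proof -
    have cc1: "continuous_on {a..b} (\<lambda>x. f x * \<rho>1 n x)"
      by (rule continuous_on_mult[OF fc continuous_on_subset[OF c1]]) simp
    have cc2: "continuous_on {a..b} (\<lambda>x. f x * \<rho>2 n x)"
      by (rule continuous_on_mult[OF fc continuous_on_subset[OF c2]]) simp
    have cc: "continuous_on {a..b} (\<lambda>x. f x * deriv (phi s t (\<delta> n)) x)"
      unfolding dphi by (rule continuous_on_mult[OF fc continuous_on_diff[OF continuous_on_subset[OF c1] continuous_on_subset[OF c2]]]) simp_all
    have ai: "(\<lambda>x. f x * deriv (phi s t (\<delta> n)) x) absolutely_integrable_on {a<..<b}"
      by (rule set_integrable_subset[OF absolutely_integrable_continuous_real[OF cc]]) auto
    have "(LINT x:{a<..<b}|lebesgue. f x * deriv (phi s t (\<delta> n)) x) = integral {a<..<b} (\<lambda>x. f x * deriv (phi s t (\<delta> n)) x)"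
      by (rule set_lebesgue_integral_eq_integral(2)[OF ai])
    also have "\<dots> = integral {a..b} (\<lambda>x. f x * deriv (phi s t (\<delta> n)) x)"
      by (rule integral_open_interval_real[symmetric])
    also have "\<dots> = integral {a..b} (\<lambda>x. f x * \<rho>1 n x - f x * \<rho>2 n x)"
      unfolding dphi by (simp add: algebra_simps)
    also have "\<dots> = integral {a..b} (\<lambda>x. f x * \<rho>1 n x) - integral {a..b} (\<lambda>x. f x * \<rho>2 n x)"
      by (rule integral_diff[OF integrable_continuous_interval[OF cc1] integrable_continuous_interval[OF cc2]])
    finally show ?thesis .
  qed
  have I1: "(\<lambda>n. integral {a..b} (\<lambda>x. f x * \<rho>1 n x)) \<longlonglongrightarrow> f s"
  proof (rule avg_lim_gen[where c = "\<lambda>n. s" and d = "\<lambda>n. s + \<delta> n" and M = M])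
    show "continuous_on {a..b} f" by (rule fc)
    show "s \<in> {a..b}" using ab by simp
    show "s < s + \<delta> n" for n using dpos[of n] by simp
    show "a \<le> s" for n :: nat using ab by simp
    show "s + \<delta> n \<le> b" for n using dle[of n] ab by (simp add: field_simps)
    show "s \<in> {s..s + \<delta> n}" for n using dpos[of n] by simp
    show "(\<lambda>n. s + \<delta> n - s) \<longlonglongrightarrow> 0" using dlim by simp
    show "continuous_on UNIV (\<rho>1 n)" for n by (rule c1)
    show "\<forall>x. x \<notin> {s..s + \<delta> n} \<longrightarrow> \<rho>1 n x = 0" for n
    proof (intro allI impI)
      fix x assume "x \<notin> {s..s + \<delta> n}"
      then have "(x - s) / \<delta> n \<le> 0 \<or> 1 \<le> (x - s) / \<delta> n"
        using dpos[of n] by (auto simp: divide_nonpos_pos le_divide_eq)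
      then show "\<rho>1 n x = 0" by (simp add: \<rho>1_def psi'_zero)
    qed
    show "0 < M" by (rule M)
    show "\<bar>\<rho>1 n x\<bar> * (s + \<delta> n - s) \<le> M" for n x
      using M(2)[of "(x - s) / \<delta> n"] dpos[of n] by (simp add: \<rho>1_def abs_divide)
    show "integral {s..s + \<delta> n} (\<rho>1 n) = 1" for n
      unfolding \<rho>1_def using ftc_rho1[OF dpos[of n], of s] by simp
  qed
  have I2: "(\<lambda>n. integral {a..b} (\<lambda>x. f x * \<rho>2 n x)) \<longlonglongrightarrow> f t"
  proof (rule avg_lim_gen[where c = "\<lambda>n. t - \<delta> n" and d = "\<lambda>n. t" and M = M])
    show "continuous_on {a..b} f" by (rule fc)
    show "t \<in> {a..b}" using ab by simp
    show "t - \<delta> n < t" for n using dpos[of n] by simp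
    show "a \<le> t - \<delta> n" for n using dle[of n] ab by (simp add: field_simps)
    show "t \<le> b" for n :: nat using ab by simp
    show "t \<in> {t - \<delta> n..t}" for n using dpos[of n] by simp
    show "(\<lambda>n. t - (t - \<delta> n)) \<longlonglongrightarrow> 0" using dlim by simp
    show "continuous_on UNIV (\<rho>2 n)" for n by (rule c2)
    show "\<forall>x. x \<notin> {t - \<delta> n..t} \<longrightarrow> \<rho>2 n x = 0" for n
    proof (intro allI impI)
      fix x assume "x \<notin> {t - \<delta> n..t}"
      then have "(t - x) / \<delta> n \<le> 0 \<or> 1 \<le> (t - x) / \<delta> n"
        using dpos[of n] by (auto simp: divide_nonpos_pos le_divide_eq)
      then show "\<rho>2 n x = 0" by (simp add: \<rho>2_def psi'_zero)
    qed
    show "0 < M" by (rule M)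
    show "\<bar>\<rho>2 n x\<bar> * (t - (t - \<delta> n)) \<le> M" for n x
      using M(2)[of "(t - x) / \<delta> n"] dpos[of n] by (simp add: \<rho>2_def abs_divide)
    show "integral {t - \<delta> n..t} (\<rho>2 n) = 1" for n
      unfolding \<rho>2_def using ftc_rho2[OF dpos[of n], of t] by simp
  qed
  have Lf_lim: "(\<lambda>n. LINT x:{a<..<b}|lebesgue. f x * deriv (phi s t (\<delta> n)) x) \<longlonglongrightarrow> f s - f t"
    unfolding Lf by (rule tendsto_diff[OF I1 I2])
  have Lg_lim: "(\<lambda>n. LINT x:{a<..<b}|lebesgue. g x * phi s t (\<delta> n) x) \<longlonglongrightarrow> (LINT x:{s<..<t}|lebesgue. g x)"
    by (rule dom_part[OF ab gm gi dpos dlim])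
  have eq: "(LINT x:{a<..<b}|lebesgue. f x * deriv (phi s t (\<delta> n)) x) = - (LINT x:{a<..<b}|lebesgue. g x * phi s t (\<delta> n) x)" for n
    using wd phi_test[OF dpos[of n] ab(1) ab(3)] unfolding weak_deriv_on_def by blast
  have "(\<lambda>n. LINT x:{a<..<b}|lebesgue. f x * deriv (phi s t (\<delta> n)) x) \<longlonglongrightarrow> - (LINT x:{s<..<t}|lebesgue. g x)"
    unfolding eq by (rule tendsto_minus[OF Lg_lim])
  with Lf_lim have "f s - f t = - (LINT x:{s<..<t}|lebesgue. g x)" by (rule LIMSEQ_unique)
  then show ?thesis by linarith
qed



lemma abs_le_sq: "\<bar>y::real\<bar> \<le> 1 + y\<^sup>2"
proof (cases "\<bar>y\<bar> \<le> 1")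
  case True
  have "1 \<le> 1 + y\<^sup>2" by simp
  with True show ?thesis by (rule order_trans)
next
  case False
  have "\<bar>y\<bar> * 1 \<le> \<bar>y\<bar> * \<bar>y\<bar>" by (rule mult_left_mono) (use False in auto)
  moreover have "\<bar>y\<bar> * \<bar>y\<bar> = y\<^sup>2" by (simp add: power2_eq_square)
  ultimately have "\<bar>y\<bar> \<le> y\<^sup>2" by simp
  moreover have "y\<^sup>2 \<le> 1 + y\<^sup>2" by simp
  ultimately show ?thesis by (rule order_trans)
qed

lemma L2_L1:
  fixes g :: "real \<Rightarrow> real"
  assumes "L2_on g a b"
  shows "set_integrable lebesgue {a<..<b} g"
proof -
  have gm: "(\<lambda>x. indicator {a<..<b} x * g x) \<in> borel_measurable lebesgue"
   and g2: "set_integrable lebesgue {a<..<b} (\<lambda>x. (g x)\<^sup>2)"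
    using assms by (auto simp: L2_on_def)
  have i1: "integrable lebesgue (indicator {a<..<b} :: real \<Rightarrow> real)"
    by (rule integrable_real_indicator) (use emeasure_bounded_finite[of "{a<..<b}"] in auto)
  have i2: "integrable lebesgue (\<lambda>x. indicator {a<..<b} x * (g x)\<^sup>2)"
    using g2 by (simp add: set_integrable_def)
  have "integrable lebesgue (\<lambda>x. indicator {a<..<b} x * g x)"
  proof (rule Bochner_Integration.integrable_bound[OF Bochner_Integration.integrable_add[OF i1 i2] gm])
    show "AE x in lebesgue. norm (indicator {a<..<b} x * g x) \<le> norm (indicator {a<..<b} x + indicator {a<..<b} x * (g x)\<^sup>2)"
    proof (rule AE_I2)
      fix x
      show "norm (indicator {a<..<b} x * g x) \<le> norm (indicator {a<..<b} x + indicator {a<..<b} x * (g x)\<^sup>2 :: real)"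
        using abs_le_sq[of "g x"] by (cases "x \<in> {a<..<b}") (auto simp: indicator_def)
    qed
  qed
  then show ?thesis by (simp add: set_integrable_def)
qed

lemma sign_lemma: "\<bar>r - c\<bar> < \<bar>c::real\<bar> \<Longrightarrow> 0 < r * c"
  using zero_less_mult_iff by fastforce

lemma key_interval:
  fixes f g :: "real \<Rightarrow> real"
  assumes ab: "a < b"
    and frange: "\<forall>x\<in>{a..b}. f x \<in> {0..1}"
    and gi: "set_integrable lebesgue {a<..<b} g"
    and ftc: "\<And>s t. a < s \<Longrightarrow> s < t \<Longrightarrow> t < b \<Longrightarrow> f t - f s = (LINT x:{s<..<t}|lebesgue. g x)"
  shows "AE x in lebesgue. x \<in> {a<..<b} \<longrightarrow> (f x = 0 \<or> f x = 1) \<longrightarrow> g x = 0"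
proof -
  define G where "G x = indicator {a<..<b} x * g x" for x
  define G2 where "G2 x = G (- x)" for x
  have G2eq: "G2 = (\<lambda>x. G (- x))" by (rule ext) (simp add: G2_def)
  have Gabs: "G absolutely_integrable_on UNIV"
    using gi by (simp add: set_integrable_def G_def)
  have Gint: "G integrable_on cbox p q" for p q
    using absolutely_integrable_on_subcbox[OF Gabs, of p q] set_lebesgue_integral_eq_integral(1) by blast
  have G2int: "G2 integrable_on cbox p q" for p q
  proof -
    have "G integrable_on {-q..-p}" using Gint[of "-q" "-p"] by simp
    then have "(\<lambda>x. G (- x)) integrable_on {- (- p)..- (- q)}"
      using Henstock_Kurzweil_Integration.integrable_reflect_real[where f = G and a = "-q" and b = "-p"] by simp
    then show ?thesis by (simp add: G2eq)
  qed
  obtain N1 where N1: "negligible N1"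
    "\<And>x e. \<lbrakk>x \<notin> N1; 0 < e\<rbrakk> \<Longrightarrow> \<exists>d>0. \<forall>h. 0 < h \<and> h < d \<longrightarrow>
        norm (integral (cbox x (x + h *\<^sub>R One)) G /\<^sub>R h ^ DIM(real) - G x) < e"
    using integrable_ccontinuous_explicit[of G] Gint by metis
  obtain N2 where N2: "negligible N2"
    "\<And>x e. \<lbrakk>x \<notin> N2; 0 < e\<rbrakk> \<Longrightarrow> \<exists>d>0. \<forall>h. 0 < h \<and> h < d \<longrightarrow>
        norm (integral (cbox x (x + h *\<^sub>R One)) G2 /\<^sub>R h ^ DIM(real) - G2 x) < e"
    using integrable_ccontinuous_explicit[of G2] G2int by metis
  have ftcG: "integral {p..q} G = f q - f p" if "a < p" "p < q" "q < b" for p q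
  proof -
    have sub: "{p<..<q} \<subseteq> {a<..<b}" using that by auto
    have gpq: "g absolutely_integrable_on {p<..<q}"
      by (rule set_integrable_subset[OF gi]) (use sub in auto)
    have "f q - f p = (LINT x:{p<..<q}|lebesgue. g x)" using ftc that by blast
    also have "\<dots> = integral {p<..<q} g" by (rule set_lebesgue_integral_eq_integral(2)[OF gpq])
    also have "\<dots> = integral {p<..<q} G"
      by (rule integral_cong) (use sub in \<open>auto simp: G_def\<close>)
    also have "\<dots> = integral {p..q} G" by (rule integral_open_interval_real[symmetric])
    finally show ?thesis by simp
  qed
  let ?N = "N1 \<union> uminus ` N2"
  have negN: "negligible ?N"
  proof (rule negligible_Un[OF N1(1)])
    show "negligible (uminus ` N2)"
      by (rule negligible_differentiable_image_negligible[OF order_refl N2(1)])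
         (auto intro!: derivative_intros simp: differentiable_on_def)
  qed
  have main: "g x = 0" if x: "x \<in> {a<..<b}" "f x = 0 \<or> f x = 1" "x \<notin> ?N" for x
  proof (rule ccontr)
    assume gx: "g x \<noteq> 0"
    then have e: "\<bar>g x\<bar> > 0" by simp
    have Gx: "G x = g x" using x by (simp add: G_def)
    have G2x: "G2 (- x) = g x" using x by (simp add: G2_def G_def)
    have x1: "x \<notin> N1" and x2: "- x \<notin> N2" using x(3) by (auto simp: image_iff)
    obtain d1 where d1: "d1 > 0" "\<forall>h. 0 < h \<and> h < d1 \<longrightarrow>
        norm (integral (cbox x (x + h *\<^sub>R One)) G /\<^sub>R h ^ DIM(real) - G x) < \<bar>g x\<bar>"
      using N1(2)[OF x1 e] by blast
    obtain d2 where d2: "d2 > 0" "\<forall>h. 0 < h \<and> h < d2 \<longrightarrow>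
        norm (integral (cbox (- x) (- x + h *\<^sub>R One)) G2 /\<^sub>R h ^ DIM(real) - G2 (- x)) < \<bar>g x\<bar>"
      using N2(2)[OF x2 e] by blast
    define m where "m = min (min d1 d2) (min (b - x) (x - a))"
    have m: "0 < m" "m \<le> d1" "m \<le> d2" "m \<le> b - x" "m \<le> x - a"
      using d1(1) d2(1) x(1) by (auto simp: m_def)
    define h where "h = m / 2"
    have h: "0 < h" "h < d1" "h < d2" "x + h < b" "a < x - h"
      using m unfolding h_def by linarith+
    have R: "\<bar>integral {x..x + h} G / h - g x\<bar> < \<bar>g x\<bar>"
      using d1(2) h Gx by (auto simp: divide_inverse mult.commute)
    have L0: "\<bar>integral {- x..- x + h} G2 / h - g x\<bar> < \<bar>g x\<bar>"
      using d2(2) h G2x by (auto simp: divide_inverse mult.commute)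
    have "integral {- x..- x + h} G2 = integral {x - h..x} G"
      using Henstock_Kurzweil_Integration.integral_reflect_real[where f = G and a = "x - h" and b = x] by (simp add: G2eq)
    with L0 have L: "\<bar>integral {x - h..x} G / h - g x\<bar> < \<bar>g x\<bar>" by simp
    have R': "integral {x..x + h} G = f (x + h) - f x"
      using ftcG[of x "x + h"] x(1) h by simp
    have L': "integral {x - h..x} G = f x - f (x - h)"
      using ftcG[of "x - h" x] x(1) h by simp
    define Rq where "Rq = (f (x + h) - f x) / h"
    define Lq where "Lq = (f x - f (x - h)) / h"
    have "0 < Rq * g x" using sign_lemma[OF R] R' by (simp add: Rq_def)
    moreover have "0 < Lq * g x" using sign_lemma[OF L] L' by (simp add: Lq_def)
    ultimately have pos: "0 < (Rq * Lq) * (g x * g x)"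
      by (metis mult.assoc mult.left_commute zero_less_mult_iff)
    have fb: "f (x + h) \<in> {0..1}" "f (x - h) \<in> {0..1}"
      using frange h x(1) by auto
    have "Rq * Lq \<le> 0"
    proof (cases "f x = 0")
      case True
      then have "0 \<le> Rq" "Lq \<le> 0" using fb h(1) by (auto simp: Rq_def Lq_def divide_nonpos_pos)
      then show ?thesis by (simp add: mult_nonneg_nonpos)
    next
      case False
      with x(2) have "f x = 1" by simp
      then have "Rq \<le> 0" "0 \<le> Lq" using fb h(1) by (auto simp: Rq_def Lq_def divide_nonpos_pos)
      then show ?thesis by (simp add: mult_nonpos_nonneg)
    qed
    moreover have "0 \<le> g x * g x" by simp
    ultimately have "(Rq * Lq) * (g x * g x) \<le> 0" by (simp add: mult_nonpos_nonneg)
    with pos show False by simp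
  qed
  show ?thesis
  proof (rule AE_I'[of ?N])
    show "?N \<in> null_sets lebesgue" using negN by (simp add: negligible_iff_null_sets)
    show "{x \<in> space lebesgue. \<not> (x \<in> {a<..<b} \<longrightarrow> (f x = 0 \<or> f x = 1) \<longrightarrow> g x = 0)} \<subseteq> ?N"
      using main by blast
  qed
qed



theorem theorem5:
  fixes w :: "'v::finite \<Rightarrow> 'v \<Rightarrow> real" and r \<epsilon> :: real and T :: "real set"
    and u u' \<beta> :: "real \<Rightarrow> 'v \<Rightarrow> real"
  assumes "wgraph w" and "0 \<le> r" and "r \<le> 1" and "\<epsilon> > 0"
    and "is_interval T"
    and "H1_loc T u"
    and "\<forall>i. continuous_on T (\<lambda>t. u t i)"
    and "\<forall>t\<in>T. \<forall>i. u t i \<in> {0..1}"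
    and "\<forall>i. \<forall>a\<in>T. \<forall>b\<in>T. L2_on (\<lambda>t. u' t i) a b \<and> weak_deriv_on (\<lambda>t. u t i) (\<lambda>t. u' t i) a b"
    and "AE t in lebesgue. t \<in> T \<longrightarrow>
           (\<forall>i. \<epsilon> * u' t i + \<epsilon> * graph_laplacian w r (u t) i - u t i + graph_mean w r (u t)
                 = \<beta> t i - graph_mean w r (\<beta> t))
           \<and> \<beta> t \<in> Bset (u t)"
  shows "AE t in lebesgue. t \<in> T \<longrightarrow> (\<forall>i.
           (u t i = 0 \<longrightarrow> \<beta> t i - graph_mean w r (\<beta> t)
               = graph_mean w r (u t) + \<epsilon> * graph_laplacian w r (u t) i)
         \<and> (0 < u t i \<and> u t i < 1 \<longrightarrow> \<beta> t i - graph_mean w r (\<beta> t) = - graph_mean w r (\<beta> t))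
         \<and> (u t i = 1 \<longrightarrow> \<beta> t i - graph_mean w r (\<beta> t)
               = graph_mean w r (u t) - 1 + \<epsilon> * graph_laplacian w r (u t) i))"
proof -
  note intv = assms(5) and cont = assms(7) and rng = assms(8) and wk = assms(9) and eqn = assms(10)
  have seg: "{a..b} \<subseteq> T" if "a \<in> T" "b \<in> T" for a b
  proof
    fix x assume "x \<in> {a..b}"
    then show "x \<in> T" using intv[unfolded is_interval_1, rule_format, OF that] by simp
  qed
  have loc: "AE x in lebesgue. x \<in> {a<..<b} \<longrightarrow> (u x i = 0 \<or> u x i = 1) \<longrightarrow> u' x i = 0"
    if ab: "a \<in> T" "b \<in> T" "a < b" for i a b
  proof (rule key_interval[where f = "\<lambda>t. u t i" and g = "\<lambda>t. u' t i", OF ab(3)])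
    show "\<forall>x\<in>{a..b}. u x i \<in> {0..1}" using rng seg[OF ab(1,2)] by blast
    have L2: "L2_on (\<lambda>t. u' t i) a b" and wd: "weak_deriv_on (\<lambda>t. u t i) (\<lambda>t. u' t i) a b"
      using wk ab by blast+
    show gi: "set_integrable lebesgue {a<..<b} (\<lambda>t. u' t i)" by (rule L2_L1[OF L2])
    have gm: "(\<lambda>x. indicator {a<..<b} x * u' x i) \<in> borel_measurable lebesgue"
      using L2 by (simp add: L2_on_def)
    have fc: "continuous_on {a..b} (\<lambda>t. u t i)"
      using continuous_on_subset[OF cont[rule_format, of i] seg[OF ab(1,2)]] .
    show "u t i - u s i = (LINT x:{s<..<t}|lebesgue. u' x i)" if "a < s" "s < t" "t < b" for s t
      by (rule ftc_weak[OF that fc gm gi wd])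
  qed
  define Q where "Q = {pq. fst pq \<in> \<rat> \<and> snd pq \<in> \<rat> \<and> fst pq \<in> T \<and> snd pq \<in> T \<and> fst pq < snd pq}"
  have cQ: "countable Q"
  proof (rule countable_subset)
    show "Q \<subseteq> \<rat> \<times> \<rat>" by (auto simp: Q_def)
    show "countable (\<rat> \<times> (\<rat> :: real set))" by (intro countable_SIGMA countable_rat)
  qed
  have glob: "AE x in lebesgue. x \<in> T \<longrightarrow> (u x i = 0 \<or> u x i = 1) \<longrightarrow> u' x i = 0" for i
  proof -
    have A1: "AE x in lebesgue. \<forall>pq\<in>Q. x \<in> {fst pq<..<snd pq} \<longrightarrow> (u x i = 0 \<or> u x i = 1) \<longrightarrow> u' x i = 0"
    proof (rule AE_ball_countable'[OF _ cQ])
      fix pq assume "pq \<in> Q"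
      then have "fst pq \<in> T" "snd pq \<in> T" "fst pq < snd pq" by (auto simp: Q_def)
      then show "AE x in lebesgue. x \<in> {fst pq<..<snd pq} \<longrightarrow> (u x i = 0 \<or> u x i = 1) \<longrightarrow> u' x i = 0"
        by (rule loc)
    qed
    have "frontier T \<in> null_sets lebesgue"
      using negligible_convex_frontier[OF is_interval_convex[OF intv]] by (simp add: negligible_iff_null_sets)
    then have A2: "AE x in lebesgue. x \<notin> frontier T" by (rule AE_not_in)
    show ?thesis
    proof (rule AE_mp[OF AE_conjI[OF A1 A2]], rule AE_I2, intro impI)
      fix x assume H: "(\<forall>pq\<in>Q. x \<in> {fst pq<..<snd pq} \<longrightarrow> (u x i = 0 \<or> u x i = 1) \<longrightarrow> u' x i = 0) \<and> x \<notin> frontier T"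
        and xT: "x \<in> T" and z: "u x i = 0 \<or> u x i = 1"
      have "x \<in> interior T" using H xT closure_subset[of T] by (auto simp: frontier_def)
      then obtain e where e: "e > 0" "ball x e \<subseteq> T"
        using open_interior open_contains_ball interior_subset by (metis subset_trans)
      obtain p where p: "p \<in> \<rat>" "x - e < p" "p < x" using Rats_dense_in_real[of "x - e" x] e by auto
      obtain q where q: "q \<in> \<rat>" "x < q" "q < x + e" using Rats_dense_in_real[of x "x + e"] e by auto
      have "p \<in> T" "q \<in> T" using p q e by (auto simp: dist_real_def subset_iff)
      then have "(p, q) \<in> Q" using p q by (simp add: Q_def)
      then have "x \<in> {fst (p, q)<..<snd (p, q)} \<longrightarrow> (u x i = 0 \<or> u x i = 1) \<longrightarrow> u' x i = 0"
        using H by blast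
      then show "u' x i = 0" using z p(3) q(2) by simp
    qed
  qed
  have allI': "AE x in lebesgue. \<forall>i\<in>UNIV. x \<in> T \<longrightarrow> (u x i = 0 \<or> u x i = 1) \<longrightarrow> u' x i = 0"
    by (rule AE_finite_allI[OF finite]) (rule glob)
  show ?thesis
  proof (rule AE_mp[OF AE_conjI[OF eqn allI']], rule AE_I2, intro impI allI)
    fix t i
    assume H: "(t \<in> T \<longrightarrow>
           (\<forall>i. \<epsilon> * u' t i + \<epsilon> * graph_laplacian w r (u t) i - u t i + graph_mean w r (u t)
                 = \<beta> t i - graph_mean w r (\<beta> t))
           \<and> \<beta> t \<in> Bset (u t)) \<and> (\<forall>i\<in>UNIV. t \<in> T \<longrightarrow> (u t i = 0 \<or> u t i = 1) \<longrightarrow> u' t i = 0)"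
      and tT: "t \<in> T"
    have E: "\<epsilon> * u' t i + \<epsilon> * graph_laplacian w r (u t) i - u t i + graph_mean w r (u t)
                 = \<beta> t i - graph_mean w r (\<beta> t)" using H tT by blast
    have B: "\<beta> t \<in> Bset (u t)" using H tT by blast
    have K: "(u t i = 0 \<or> u t i = 1) \<longrightarrow> u' t i = 0" using H tT by blast
    have r01: "\<forall>j. u t j \<in> {0..1}" using rng tT by blast
    have Bi: "0 < u t i \<and> u t i < 1 \<longrightarrow> \<beta> t i = 0"
      using B r01 unfolding Bset_def by auto
    show "(u t i = 0 \<longrightarrow> \<beta> t i - graph_mean w r (\<beta> t)
               = graph_mean w r (u t) + \<epsilon> * graph_laplacian w r (u t) i)
         \<and> (0 < u t i \<and> u t i < 1 \<longrightarrow> \<beta> t i - graph_mean w r (\<beta> t) = - graph_mean w r (\<beta> t))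
         \<and> (u t i = 1 \<longrightarrow> \<beta> t i - graph_mean w r (\<beta> t)
               = graph_mean w r (u t) - 1 + \<epsilon> * graph_laplacian w r (u t) i)"
    proof (intro conjI impI)
      assume "u t i = 0"
      then have "u' t i = 0" using K by simp
      then show "\<beta> t i - graph_mean w r (\<beta> t) = graph_mean w r (u t) + \<epsilon> * graph_laplacian w r (u t) i"
        using E \<open>u t i = 0\<close> by simp
    next
      assume "0 < u t i \<and> u t i < 1"
      then show "\<beta> t i - graph_mean w r (\<beta> t) = - graph_mean w r (\<beta> t)" using Bi by simp
    next
      assume "u t i = 1"
      then have "u' t i = 0" using K by simp
      then show "\<beta> t i - graph_mean w r (\<beta> t) = graph_mean w r (u t) - 1 + \<epsilon> * graph_laplacian w r (u t) i"
        using E \<open>u t i = 1\<close> by simp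
    qed
  qed
qed

end
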